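(* Let $\mathcal C$ be a compact and convex set of randomized policies. Let $\mu\in(0,1/K]$ and for any $W\in\mathcal C$ let $W'(x,a)=(1-K\mu)W(x,a)+\mu$. Then for all distributions $D$ (with marginal $D_X$ on contexts), \[\min_{W\in\mathcal C}\max_{Z\in\mathcal C}\ \mathbb{E}_{x\sim D_X}\mathbb{E}_{a\sim Z(x,\cdot)}\Bigl[\frac1{W'(x,a)}\Bigr]\le\frac{K}{1-K\mu}.\]
   Context: $A$ is a set of $K$ actions and $X$ a set of contexts. A randomized policy is a map $W:X\times A\to[0,1]$ such that $W(x,\cdot)$ is a probability distribution on $A$ for every $x$; $a\sim Z(x,\cdot)$ means $a$ is drawn from that distribution. $D$ is a distribution over $X\times[0,1]^K$ with marginal $D_X$ on $X$. *)

theory Defs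
  imports "HOL-Probability.Probability"
begin

text \<open>A randomized policy: a map W : X x A -> [0,1] with W(x,.) a probability
distribution on the finite action type 'a (K = CARD('a)).\<close>
definition policy :: "('x \<Rightarrow> 'a::finite \<Rightarrow> real) \<Rightarrow> bool" where
  "policy W \<longleftrightarrow> (\<forall>x a. 0 \<le> W x a \<and> W x a \<le> 1) \<and> (\<forall>x. (\<Sum>a\<in>UNIV. W x a) = 1)"

definition policy_convex :: "('x \<Rightarrow> 'a \<Rightarrow> real) set \<Rightarrow> bool" where
  "policy_convex C \<longleftrightarrow>
     (\<forall>W\<in>C. \<forall>Z\<in>C. \<forall>t::real. 0 \<le> t \<and> t \<le> 1 \<longrightarrow> (\<lambda>x a. t * W x a + (1 - t) * Z x a) \<in> C)"

definition smooth_policy :: "real \<Rightarrow> ('x \<Rightarrow> 'a::finite \<Rightarrow> real) \<Rightarrow> 'x \<Rightarrow> 'a \<Rightarrow> real" where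
  "smooth_policy \<mu> W x a = (1 - real CARD('a) * \<mu>) * W x a + \<mu>"

definition inv_prob_risk ::
  "'x measure \<Rightarrow> real \<Rightarrow> ('x \<Rightarrow> 'a::finite \<Rightarrow> real) \<Rightarrow> ('x \<Rightarrow> 'a \<Rightarrow> real) \<Rightarrow> real" where
  "inv_prob_risk DX \<mu> W Z = (\<integral>x. (\<Sum>a\<in>UNIV. Z x a * (1 / smooth_policy \<mu> W x a)) \<partial>DX)"

end

theory Submission
  imports Defs
begin

lemma ln_step:
  fixes w z t \<mu> :: real
  assumes "\<mu> \<le> w" "w \<le> 1" "\<mu> \<le> z" "z \<le> 1" "0 < \<mu>" "0 \<le> t" "t \<le> 1"
  shows "t*(z-w)/w - t^2/\<mu>^2 \<le> ln (w + t*(z-w)) - ln w"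
proof -
  define v where "v = w + t*(z-w)"
  have v: "\<mu> \<le> v" unfolding v_def
  proof -
    have "(1-t)*\<mu> \<le> (1-t)*w" "t*\<mu> \<le> t*z" using assms by (auto intro: mult_left_mono)
    thus "\<mu> \<le> w + t*(z-w)" by (simp add: algebra_simps)
  qed
  have wp: "0 < w" "0 < v" using assms v by auto
  have "ln (w/v) \<le> w/v - 1" by (rule ln_le_minus_one) (use wp in simp)
  hence 1: "t*(z-w)/v \<le> ln v - ln w" using wp by (simp add: ln_div field_simps v_def)
  have e: "t*(z-w)/v - t*(z-w)/w = - (t^2*(z-w)^2)/(v * w)" using wp
    by (simp add: field_simps v_def power2_eq_square)
  have "\<bar>z-w\<bar> \<le> 1" using assms by auto
  hence "(z-w)^2 \<le> 1" by (simp add: abs_square_le_1)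
  hence "t^2*(z-w)^2 \<le> t^2" by (simp add: mult_left_le)
  moreover have "\<mu>^2 \<le> v * w" using v assms
    by (metis power2_eq_square mult_mono less_imp_le order_trans)
  ultimately have "t^2*(z-w)^2/(v * w) \<le> t^2/\<mu>^2" using assms wp
    by (meson frac_le zero_le_power2 zero_less_power)
  with e 1 show ?thesis unfolding v_def by linarith
qed

lemma sum_abs_bound:
  fixes g :: "'a::finite \<Rightarrow> real"
  assumes "\<And>a. \<bar>g a\<bar> \<le> B"
  shows "\<bar>\<Sum>a\<in>UNIV. g a\<bar> \<le> real CARD('a) * B"
proof -
  have "\<bar>\<Sum>a\<in>UNIV. g a\<bar> \<le> (\<Sum>a\<in>UNIV. \<bar>g a\<bar>)" by (rule sum_abs)
  also have "\<dots> \<le> real (card (UNIV::'a set)) * B" by (rule sum_bounded_above) (use assms in auto)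
  finally show ?thesis by simp
qed

lemma bint:
  fixes B :: real
  assumes "prob_space M" "f \<in> borel_measurable M" "\<And>x. \<bar>f x\<bar> \<le> (B::real)"
  shows "integrable M f"
proof -
  interpret prob_space M by fact
  show ?thesis by (rule integrable_const_bound[where B=B]) (use assms in auto)
qed

theorem lemma1:
  fixes C :: "('x \<Rightarrow> 'a::finite \<Rightarrow> real) set"
    and DX :: "'x measure"
    and \<mu> :: real
  assumes "prob_space DX"
    and "\<forall>W\<in>C. policy W"
    and "\<forall>W\<in>C. \<forall>a. (\<lambda>x. W x a) \<in> borel_measurable DX"
    and "C \<noteq> {}"
    and "compact C"
    and "policy_convex C"
    and "0 < \<mu>" and "\<mu> \<le> 1 / real CARD('a)"
  shows "\<exists>W\<in>C. \<forall>Z\<in>C.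
           ereal (inv_prob_risk DX \<mu> W Z) \<le> ereal (real CARD('a)) / ereal (1 - real CARD('a) * \<mu>)"
proof -
  interpret P: prob_space DX by fact
  define k where "k = real CARD('a)"
  define \<beta> where "\<beta> = 1 - k*\<mu>"
  have k1: "1 \<le> k" unfolding k_def by simp
  have kmu: "k*\<mu> \<le> 1" using assms(8) k1 unfolding k_def by (simp add: field_simps)
  have mu1: "\<mu> \<le> 1" using kmu k1 assms(7) by (smt (verit) mult_le_cancel_right1)
  have b0: "0 \<le> \<beta>" using kmu unfolding \<beta>_def by simp
  show ?thesis
  proof (cases "\<beta> = 0")
    case True
    then have "1 - real CARD('a) * \<mu> = 0" unfolding \<beta>_def k_def .
    then show ?thesis using assms(4) by (simp add: ex_in_conv)
  next
    case False
    hence bp: "0 < \<beta>" using b0 by simp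
    have pol: "\<And>W x a. W \<in> C \<Longrightarrow> 0 \<le> W x a \<and> W x a \<le> 1"
      using assms(2) unfolding policy_def by blast
    have mW: "\<And>W a. W \<in> C \<Longrightarrow> (\<lambda>x. W x a) \<in> borel_measurable DX" using assms(3) by blast
    have sp: "\<And>(W::'x\<Rightarrow>'a\<Rightarrow>real) x a. smooth_policy \<mu> W x a = \<beta> * W x a + \<mu>"
      unfolding smooth_policy_def \<beta>_def k_def by simp
    have spb: "\<And>W x a. W \<in> C \<Longrightarrow> \<mu> \<le> smooth_policy \<mu> W x a \<and> smooth_policy \<mu> W x a \<le> 1"
    proof -
      fix W x a assume W: "W \<in> C"
      have "0 \<le> \<beta> * W x a" "\<beta> * W x a \<le> \<beta>" using pol[OF W, of x a] b0
        by (auto intro: mult_left_le)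
      moreover have "\<beta> + \<mu> \<le> 1" unfolding \<beta>_def using k1 assms(7)
        by (smt (verit) mult_le_cancel_right1)
      ultimately show "\<mu> \<le> smooth_policy \<mu> W x a \<and> smooth_policy \<mu> W x a \<le> 1"
        unfolding sp by simp
    qed
    have msp: "\<And>W a. W \<in> C \<Longrightarrow> (\<lambda>x. smooth_policy \<mu> W x a) \<in> borel_measurable DX"
      unfolding sp using mW by measurable
    define \<Phi> where "\<Phi> W = (\<integral>x. (\<Sum>a\<in>UNIV. ln (smooth_policy \<mu> W x a)) \<partial>DX)" for W :: "'x \<Rightarrow> 'a \<Rightarrow> real"
    have lnb: "\<And>W x a. W \<in> C \<Longrightarrow> \<bar>ln (smooth_policy \<mu> W x a)\<bar> \<le> - ln \<mu>"
    proof -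
      fix W x a assume W: "W \<in> C"
      note s = spb[OF W, of x a]
      have "ln \<mu> \<le> ln (smooth_policy \<mu> W x a)" using s assms(7) by simp
      moreover have "ln (smooth_policy \<mu> W x a) \<le> 0" using s assms(7) by simp
      ultimately show "\<bar>ln (smooth_policy \<mu> W x a)\<bar> \<le> - ln \<mu>" by simp
    qed
    have intPhi: "\<And>W. W \<in> C \<Longrightarrow> integrable DX (\<lambda>x. \<Sum>a\<in>UNIV. ln (smooth_policy \<mu> W x a))"
    proof -
      fix W assume W: "W \<in> C"
      show "integrable DX (\<lambda>x. \<Sum>a\<in>UNIV. ln (smooth_policy \<mu> W x a))"
        by (rule bint[OF assms(1), where B="k * - ln \<mu>"])
          (use msp[OF W] in measurable, unfold k_def, rule sum_abs_bound, rule lnb[OF W])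
    qed
    have Phi0: "\<And>W. W \<in> C \<Longrightarrow> \<Phi> W \<le> 0"
    proof -
      fix W assume W: "W \<in> C"
      have "\<Phi> W \<le> (\<integral>x. 0 \<partial>DX)" unfolding \<Phi>_def
        by (rule integral_mono[OF intPhi[OF W]]) (auto intro!: sum_nonpos, metis spb[OF W] assms(7) ln_le_zero_iff less_le_trans)
      thus "\<Phi> W \<le> 0" by simp
    qed
    define S where "S = Sup (\<Phi> ` C)"
    have bdd: "bdd_above (\<Phi> ` C)" unfolding bdd_above_def using Phi0 by blast
    define t where "t = \<mu>^3/2"
    define \<delta> where "\<delta> = t*k*\<mu>/2"
    have "\<mu>^3 \<le> 1" using assms(7) mu1 by (simp add: power_le_one)
    hence tp: "0 < t" "t \<le> 1" unfolding t_def using assms(7) by auto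
    have dp: "0 < \<delta>" unfolding \<delta>_def using tp k1 assms(7) by simp
    have "S - \<delta> < S" using dp by simp
    then obtain W where W: "W \<in> C" and WS: "S - \<delta> < \<Phi> W"
      unfolding S_def using less_cSup_iff[OF _ bdd] assms(4) by blast
    show ?thesis
    proof (intro bexI[OF _ W] ballI)
      fix Z assume Z: "Z \<in> C"
      define Wt where "Wt = (\<lambda>x a. t * Z x a + (1 - t) * W x a)"
      have Wt: "Wt \<in> C" using assms(6) Z W tp unfolding policy_convex_def Wt_def by auto
      have spt: "\<And>x a. smooth_policy \<mu> Wt x a = smooth_policy \<mu> W x a
          + t * (smooth_policy \<mu> Z x a - smooth_policy \<mu> W x a)"
        unfolding sp Wt_def by (simp add: algebra_simps)
      have "\<Phi> Wt \<le> S" unfolding S_def using Wt bdd by (auto intro: cSup_upper)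
      hence diff: "\<Phi> Wt - \<Phi> W < \<delta>" using WS by simp
      define D where "D x = (\<Sum>a\<in>UNIV. (smooth_policy \<mu> Z x a - smooth_policy \<mu> W x a)
            / smooth_policy \<mu> W x a)" for x
      have wpos: "\<And>x a. 0 < smooth_policy \<mu> W x a" using spb[OF W] assms(7) by (meson less_le_trans)
      have intD: "integrable DX D"
      proof (rule bint[OF assms(1), where B="k * (1/\<mu>)"])
        show "D \<in> borel_measurable DX" unfolding D_def using msp[OF W] msp[OF Z] by measurable
        fix x show "\<bar>D x\<bar> \<le> k * (1/\<mu>)" unfolding D_def k_def
        proof (rule sum_abs_bound)
          fix a
          note s1 = spb[OF W, of x a] and s2 = spb[OF Z, of x a]
          have "\<bar>smooth_policy \<mu> Z x a - smooth_policy \<mu> W x a\<bar> \<le> 1" using s1 s2 assms(7) by auto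
          have "\<bar>smooth_policy \<mu> Z x a - smooth_policy \<mu> W x a\<bar> / smooth_policy \<mu> W x a
              \<le> 1 / \<mu>" by (rule frac_le) (use s1 assms(7) \<open>\<bar>smooth_policy \<mu> Z x a - smooth_policy \<mu> W x a\<bar> \<le> 1\<close> in auto)
          thus "\<bar>(smooth_policy \<mu> Z x a - smooth_policy \<mu> W x a) / smooth_policy \<mu> W x a\<bar> \<le> 1/\<mu>"
            using wpos[of x a] by (simp add: abs_divide)
        qed
      qed
      have pw: "\<And>x. t * D x - k * (t^2/\<mu>^2) \<le>
          (\<Sum>a\<in>UNIV. ln (smooth_policy \<mu> Wt x a)) - (\<Sum>a\<in>UNIV. ln (smooth_policy \<mu> W x a))"
      proof -
        fix x
        have "t * D x - k * (t^2/\<mu>^2) = (\<Sum>a\<in>UNIV. t * (smooth_policy \<mu> Z x a - smooth_policy \<mu> W x a)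
            / smooth_policy \<mu> W x a - t^2/\<mu>^2)"
          unfolding D_def k_def by (simp add: sum_subtractf sum_distrib_left)
        also have "\<dots> \<le> (\<Sum>a\<in>UNIV. ln (smooth_policy \<mu> Wt x a) - ln (smooth_policy \<mu> W x a))"
          unfolding spt
          by (rule sum_mono, rule ln_step) (use spb[OF W] spb[OF Z] assms(7) tp in auto)
        finally show "?thesis x" by (simp add: sum_subtractf)
      qed
      have eqI: "(\<integral>x. t * D x - k * (t^2/\<mu>^2) \<partial>DX) = t * (\<integral>x. D x \<partial>DX) - k * (t^2/\<mu>^2)"
        using intD by (simp add: P.prob_space)
      have "(\<integral>x. t * D x - k * (t^2/\<mu>^2) \<partial>DX) \<le>
          (\<integral>x. (\<Sum>a\<in>UNIV. ln (smooth_policy \<mu> Wt x a)) - (\<Sum>a\<in>UNIV. ln (smooth_policy \<mu> W x a)) \<partial>DX)"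
        by (rule integral_mono) (use intD intPhi[OF W] intPhi[OF Wt] pw in auto)
      also have "\<dots> = \<Phi> Wt - \<Phi> W" unfolding \<Phi>_def
        by (rule Bochner_Integration.integral_diff[OF intPhi[OF Wt] intPhi[OF W]])
      finally have "t * (\<integral>x. D x \<partial>DX) - k * (t^2/\<mu>^2) < \<delta>" using diff eqI by linarith
      moreover have "k * (t^2/\<mu>^2) = t * (k*\<mu>/2)"
        unfolding t_def using assms(7) by (simp add: field_simps eval_nat_numeral)
      moreover have "\<delta> = t * (k*\<mu>/2)" unfolding \<delta>_def by simp
      ultimately have "t * (\<integral>x. D x \<partial>DX) < t * (k*\<mu>)" by (simp add: algebra_simps)
      hence ED: "(\<integral>x. D x \<partial>DX) < k*\<mu>" using tp by simp
      define F where "F x = (\<Sum>a\<in>UNIV. Z x a * (1 / smooth_policy \<mu> W x a))" for x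
      have intF: "integrable DX F"
      proof (rule bint[OF assms(1), where B="k * (1/\<mu>)"])
        show "F \<in> borel_measurable DX" unfolding F_def using msp[OF W] mW[OF Z] by measurable
        fix x show "\<bar>F x\<bar> \<le> k * (1/\<mu>)" unfolding F_def k_def
        proof (rule sum_abs_bound)
          fix a
          note s1 = spb[OF W, of x a] and z = pol[OF Z, of x a]
          have "Z x a / smooth_policy \<mu> W x a \<le> 1/\<mu>" by (rule frac_le) (use s1 z assms(7) in auto)
          thus "\<bar>Z x a * (1 / smooth_policy \<mu> W x a)\<bar> \<le> 1/\<mu>" using z wpos[of x a] by simp
        qed
      qed
      have pwF: "\<And>x. \<beta> * F x \<le> D x + k * (1 - \<mu>)"
      proof -
        fix x
        have eq: "\<And>a. (smooth_policy \<mu> Z x a - smooth_policy \<mu> W x a) / smooth_policy \<mu> W x a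
            = \<beta> * (Z x a * (1 / smooth_policy \<mu> W x a)) + \<mu> * (1 / smooth_policy \<mu> W x a) - 1"
          using wpos[of x] by (simp add: field_simps sp[of Z] less_imp_neq[OF wpos[of x], symmetric])
        have "D x = \<beta> * F x + \<mu> * (\<Sum>a\<in>UNIV. 1 / smooth_policy \<mu> W x a) - k"
          unfolding D_def F_def eq k_def by (simp add: sum_subtractf sum.distrib sum_distrib_left)
        moreover have "k \<le> (\<Sum>a\<in>UNIV. 1 / smooth_policy \<mu> W x a)"
        proof -
          have "(\<Sum>a\<in>(UNIV::'a set). 1) \<le> (\<Sum>a\<in>UNIV. 1 / smooth_policy \<mu> W x a)"
            by (rule sum_mono) (use spb[OF W] wpos in simp)
          thus ?thesis unfolding k_def by simp
        qed
        ultimately show "\<beta> * F x \<le> D x + k * (1 - \<mu>)" using assms(7)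
          mult_left_mono[of k "\<Sum>a\<in>UNIV. 1 / smooth_policy \<mu> W x a" \<mu>]
          by (simp add: algebra_simps)
      qed
      have "\<beta> * (\<integral>x. F x \<partial>DX) = (\<integral>x. \<beta> * F x \<partial>DX)" by simp
      also have "\<dots> \<le> (\<integral>x. D x + k * (1 - \<mu>) \<partial>DX)"
        by (rule integral_mono) (use intF intD pwF in auto)
      also have "\<dots> = (\<integral>x. D x \<partial>DX) + k * (1 - \<mu>)" using intD by (simp add: P.prob_space)
      finally have "\<beta> * (\<integral>x. F x \<partial>DX) < k" using ED by (simp add: algebra_simps)
      hence "(\<integral>x. F x \<partial>DX) < k / \<beta>" using bp by (simp add: pos_less_divide_eq mult.commute)
      hence "inv_prob_risk DX \<mu> W Z \<le> k / \<beta>" unfolding inv_prob_risk_def F_def by simp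
      thus "ereal (inv_prob_risk DX \<mu> W Z) \<le> ereal (real CARD('a)) / ereal (1 - real CARD('a) * \<mu>)"
        using False unfolding \<beta>_def k_def by simp
    qed
  qed
qed

end
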